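(* For an $L$-layer LISTA network at initialization (all weight entries i.i.d. $\mathcal N(0,1)$), for every $l\in[L]$ and $s\in[m]$, $\|\mathbf b^l_{s,0}\|_\infty=\tilde O(1/\sqrt m)$ with probability $1-me^{-c^l_{bs}\ln^2(m)}$ for some constant $c^l_{bs}>0$.
   Context: Fix $\lambda>0$ and $\sigma(x)=\log(1+e^{x-\lambda})-\log(1+e^{-x-\lambda})$ (componentwise), $L_\sigma$-Lipschitz and $\beta_\sigma$-smooth. LISTA: input $\mathbf y\in\mathbb R^n$ with $|y_i|\le C_y$, initial $\mathbf x^0\in\mathbb R^m$ with $|x_i^0|\le C_x$, $\mathbf x^l=\sigma\big(\frac1{\sqrt n}W_1^l\mathbf y+\frac1{\sqrt m}W_2^l\mathbf x^{l-1}\big)$, $W_1^l\in\mathbb R^{m\times n}$, $W_2^l\in\mathbb R^{m\times m}$, output $\mathbf f=\frac1{\sqrt m}\mathbf x^L$, $f_s$ its $s$-th entry. $\mathbf b^l_{s,0}$ denotes $\partial f_s/\partial\mathbf x^l$ evaluated at the initial weights. $\tilde O$ is with respect to $m$, suppressing logarithmic factors. *)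

theory Defs
  imports "HOL-Probability.Probability"
begin

definition lista_sigma :: "real \<Rightarrow> real \<Rightarrow> real" where
  "lista_sigma lam x = ln (1 + exp (x - lam)) - ln (1 + exp (- x - lam))"

text \<open>Random weights are a single function omega on indices (a, l, i, j):
  a = 1 gives entry (i,j) of W_1^l, a = 2 gives entry (i,j) of W_2^l.
  Vectors are functions nat => real, meaningful on indices below the dimension.\<close>
definition W1 :: "(nat \<times> nat \<times> nat \<times> nat \<Rightarrow> real) \<Rightarrow> nat \<Rightarrow> nat \<Rightarrow> nat \<Rightarrow> real" where
  "W1 \<omega> l i j = \<omega> (1, l, i, j)"

definition W2 :: "(nat \<times> nat \<times> nat \<times> nat \<Rightarrow> real) \<Rightarrow> nat \<Rightarrow> nat \<Rightarrow> nat \<Rightarrow> real" where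
  "W2 \<omega> l i j = \<omega> (2, l, i, j)"

definition lista_layer ::
  "real \<Rightarrow> nat \<Rightarrow> nat \<Rightarrow> (nat \<Rightarrow> real) \<Rightarrow> (nat \<times> nat \<times> nat \<times> nat \<Rightarrow> real) \<Rightarrow> nat
   \<Rightarrow> (nat \<Rightarrow> real) \<Rightarrow> (nat \<Rightarrow> real)" where
  "lista_layer lam n m y \<omega> l x =
     (\<lambda>i. if i < m then
        lista_sigma lam ((\<Sum>j<n. W1 \<omega> l i j * y j) / sqrt n + (\<Sum>j<m. W2 \<omega> l i j * x j) / sqrt m)
      else 0)"

primrec lista_x ::
  "real \<Rightarrow> nat \<Rightarrow> nat \<Rightarrow> (nat \<Rightarrow> real) \<Rightarrow> (nat \<Rightarrow> real) \<Rightarrow> (nat \<times> nat \<times> nat \<times> nat \<Rightarrow> real)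
   \<Rightarrow> nat \<Rightarrow> (nat \<Rightarrow> real)" where
  "lista_x lam n m y x0 \<omega> 0 = x0"
| "lista_x lam n m y x0 \<omega> (Suc l) = lista_layer lam n m y \<omega> (Suc l) (lista_x lam n m y x0 \<omega> l)"

primrec lista_fwd ::
  "real \<Rightarrow> nat \<Rightarrow> nat \<Rightarrow> (nat \<Rightarrow> real) \<Rightarrow> (nat \<times> nat \<times> nat \<times> nat \<Rightarrow> real)
   \<Rightarrow> nat \<Rightarrow> nat \<Rightarrow> (nat \<Rightarrow> real) \<Rightarrow> (nat \<Rightarrow> real)" where
  "lista_fwd lam n m y \<omega> a 0 x = x"
| "lista_fwd lam n m y \<omega> a (Suc k) x = lista_layer lam n m y \<omega> (a + Suc k) (lista_fwd lam n m y \<omega> a k x)"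

text \<open>b^l_s (j-th entry): partial derivative of f_s = x^L_s / sqrt m with respect to the
  j-th entry of x^l, evaluated at the current x^l (weights fixed).\<close>
definition lista_b ::
  "real \<Rightarrow> nat \<Rightarrow> nat \<Rightarrow> nat \<Rightarrow> (nat \<Rightarrow> real) \<Rightarrow> (nat \<Rightarrow> real) \<Rightarrow> (nat \<times> nat \<times> nat \<times> nat \<Rightarrow> real)
   \<Rightarrow> nat \<Rightarrow> nat \<Rightarrow> nat \<Rightarrow> real" where
  "lista_b lam L n m y x0 \<omega> l s j =
     (let xl = lista_x lam n m y x0 \<omega> l in
      deriv (\<lambda>t. lista_fwd lam n m y \<omega> l (L - l) (xl(j := xl j + t)) s / sqrt m) 0)"

definition lista_b_inf ::
  "real \<Rightarrow> nat \<Rightarrow> nat \<Rightarrow> nat \<Rightarrow> (nat \<Rightarrow> real) \<Rightarrow> (nat \<Rightarrow> real) \<Rightarrow> (nat \<times> nat \<times> nat \<times> nat \<Rightarrow> real)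
   \<Rightarrow> nat \<Rightarrow> nat \<Rightarrow> real" where
  "lista_b_inf lam L n m y x0 \<omega> l s = Max ((\<lambda>j. \<bar>lista_b lam L n m y x0 \<omega> l s j\<bar>) ` {..<m})"

definition lista_idx :: "nat \<Rightarrow> nat \<Rightarrow> nat \<Rightarrow> (nat \<times> nat \<times> nat \<times> nat) set" where
  "lista_idx L n m =
     {(a, l, i, j). l \<in> {1..L} \<and> i < m \<and> ((a = 1 \<and> j < n) \<or> (a = 2 \<and> j < m))}"

definition std_normal_measure :: "real measure" where
  "std_normal_measure = density lborel (\<lambda>x. ennreal (std_normal_density x))"

definition lista_init :: "nat \<Rightarrow> nat \<Rightarrow> nat \<Rightarrow> (nat \<times> nat \<times> nat \<times> nat \<Rightarrow> real) measure" where
  "lista_init L n m = PiM (lista_idx L n m) (\<lambda>_. std_normal_measure)"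

end

theory Submission
  imports Defs
begin

lemma mgf_std_normal:
  "(\<integral>\<^sup>+ z. ennreal (exp (a * z)) \<partial>std_normal_measure) = ennreal (exp (a\<^sup>2 / 2))"
proof -
  have eq: "ennreal (std_normal_density z) * ennreal (exp (a * z)) = ennreal (exp (a\<^sup>2 / 2)) * ennreal (normal_density a 1 z)" for z
  proof -
    have "std_normal_density z * exp (a * z) = exp (a\<^sup>2 / 2) * normal_density a 1 z"
      unfolding normal_density_def by (simp add: mult_ac exp_add[symmetric] power2_eq_square field_simps)
    then show ?thesis by (simp add: ennreal_mult'[symmetric] normal_density_nonneg)
  qed
  have one: "(\<integral>\<^sup>+ z. ennreal (normal_density a 1 z) \<partial>lborel) = 1"
    by (simp add: nn_integral_eq_integral normal_density_nonneg)
  have "(\<integral>\<^sup>+ z. ennreal (exp (a * z)) \<partial>std_normal_measure) = (\<integral>\<^sup>+ z. ennreal (std_normal_density z) * ennreal (exp (a * z)) \<partial>lborel)"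
    unfolding std_normal_measure_def by (subst nn_integral_density) auto
  also have "\<dots> = (\<integral>\<^sup>+ z. ennreal (exp (a\<^sup>2 / 2)) * ennreal (normal_density a 1 z) \<partial>lborel)"
    using eq by simp
  also have "\<dots> = ennreal (exp (a\<^sup>2 / 2))"
    by (subst nn_integral_cmult) (auto simp: one)
  finally show ?thesis .
qed

lemma prob_space_std: "prob_space std_normal_measure"
  unfolding std_normal_measure_def using real_dist_normal_dist unfolding real_distribution_def by simp


lemma c1: assumes True: "\<iota> \<in> I" shows "(\<lambda>\<omega>. \<omega> \<iota>) \<in> borel_measurable (PiM I (\<lambda>_. std_normal_measure))"
proof -
  have a: "(\<lambda>\<omega>. \<omega> \<iota>) \<in> measurable (PiM I (\<lambda>_. std_normal_measure)) std_normal_measure"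
    by (rule measurable_component_singleton[OF True])
  have b: "sets std_normal_measure = sets borel" unfolding std_normal_measure_def by simp
  have c: "measurable (PiM I (\<lambda>_. std_normal_measure)) std_normal_measure = measurable (PiM I (\<lambda>_. std_normal_measure)) borel"
    by (rule measurable_cong_sets[OF refl b])
  from a show ?thesis by (simp only: c)
qed
lemma c2: assumes False: "\<iota> \<notin> I" shows "(\<lambda>\<omega>. \<omega> \<iota>) \<in> borel_measurable (PiM I (\<lambda>_. std_normal_measure))"
proof -
  have e: "\<omega> \<iota> = undefined" if "\<omega> \<in> space (PiM I (\<lambda>_. std_normal_measure))" for \<omega>
    using that False unfolding space_PiM by (rule PiE_arb)
  show ?thesis
    by (rule measurable_cong[THEN iffD2, OF e measurable_const]) simp_all
qed

lemma comp_meas: "(\<lambda>\<omega>. \<omega> \<iota>) \<in> borel_measurable (PiM I (\<lambda>_. std_normal_measure))"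
proof (cases "\<iota> \<in> I")
  case True then show ?thesis by (rule c1)
next
  case False then show ?thesis by (rule c2)
qed

lemma mexp: "(\<lambda>z. ennreal (exp (K * z))) \<in> borel_measurable std_normal_measure"
proof -
  have [measurable_cong]: "sets std_normal_measure = sets borel" unfolding std_normal_measure_def by simp
  show ?thesis by measurable
qed

lemma mexp2: "(\<lambda>z. ennreal (exp (K * z))) \<in> borel_measurable borel"
  by measurable

lemma core:
  fixes I :: "'i set" and \<rho> :: "nat \<Rightarrow> 'i" and u :: "('i \<Rightarrow> real) \<Rightarrow> nat \<Rightarrow> real"
  assumes fin: "finite I" and inj: "inj_on \<rho> {..<m}" and sub: "\<rho> ` {..<m} \<subseteq> I"
  and meas: "\<And>j. (\<lambda>\<omega>. u \<omega> j) \<in> borel_measurable (PiM I (\<lambda>_. std_normal_measure))"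
  and dep: "\<And>\<omega> \<omega>'. (\<And>\<iota>. \<iota> \<notin> \<rho> ` {..<m} \<Longrightarrow> \<omega> \<iota> = \<omega>' \<iota>) \<Longrightarrow> u \<omega> = u \<omega>'"
  and nrm: "\<And>\<omega>. (\<Sum>j<m. (u \<omega> j)\<^sup>2) \<le> 1"
  and T: "T \<ge> 0"
  shows "emeasure (PiM I (\<lambda>_. std_normal_measure)) {\<omega> \<in> space (PiM I (\<lambda>_. std_normal_measure)). T \<le> (\<Sum>j<m. \<omega> (\<rho> j) * u \<omega> j)} \<le> ennreal (exp (- T\<^sup>2 / 2))"
proof -
  define N where "N = std_normal_measure"
  define P where "P = PiM I (\<lambda>_. N)"
  define R where "R = \<rho> ` {..<m}"
  define J where "J = I - R"
  define G where "G = (\<lambda>\<omega>. \<Sum>j<m. \<omega> (\<rho> j) * u \<omega> j)"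
  have [measurable_cong]: "sets N = sets borel" unfolding N_def std_normal_measure_def by simp
  have probN: "prob_space N" unfolding N_def by (rule prob_space_std)
  interpret PS: product_sigma_finite "\<lambda>_. N"
    unfolding product_sigma_finite_def using probN by (simp add: prob_space_imp_sigma_finite)
  have [measurable]: "(\<lambda>\<omega>. u \<omega> j) \<in> borel_measurable P" for j using meas unfolding P_def N_def by simp
  have comp[measurable]: "(\<lambda>\<omega>. \<omega> (\<rho> j)) \<in> borel_measurable P" if "j < m" for j
    unfolding P_def N_def by (rule comp_meas)
  have Gm[measurable]: "G \<in> borel_measurable P" unfolding G_def by measurable
  have Sm: "{\<omega> \<in> space P. T \<le> G \<omega>} \<in> sets P" by measurable
  have IJR: "I = J \<union> R" "J \<inter> R = {}" "finite J" "finite R"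
    using sub fin unfolding J_def R_def by auto
  have step1: "emeasure P {\<omega> \<in> space P. T \<le> G \<omega>} \<le> (\<integral>\<^sup>+ \<omega>. ennreal (exp (T * G \<omega> - T\<^sup>2)) \<partial>P)"
  proof -
    have "emeasure P {\<omega> \<in> space P. T \<le> G \<omega>} = (\<integral>\<^sup>+ \<omega>. indicator {\<omega> \<in> space P. T \<le> G \<omega>} \<omega> \<partial>P)"
      using Sm by simp
    also have "\<dots> \<le> (\<integral>\<^sup>+ \<omega>. ennreal (exp (T * G \<omega> - T\<^sup>2)) \<partial>P)"
    proof (rule nn_integral_mono)
      fix \<omega> assume "\<omega> \<in> space P"
      show "indicator {\<omega> \<in> space P. T \<le> G \<omega>} \<omega> \<le> ennreal (exp (T * G \<omega> - T\<^sup>2))"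
      proof (cases "T \<le> G \<omega>")
        case True
        then have "T * T \<le> T * G \<omega>" using T by (simp add: mult_left_mono)
        then have "1 \<le> exp (T * G \<omega> - T\<^sup>2)" by (simp add: power2_eq_square)
        then show ?thesis using True \<open>\<omega> \<in> space P\<close> by (simp add: indicator_def)
      qed (simp add: indicator_def)
    qed
    finally show ?thesis .
  qed
  have inner: "(\<integral>\<^sup>+ y. ennreal (exp (T * G (merge J R (x, y)))) \<partial>PiM R (\<lambda>_. N)) \<le> ennreal (exp (T\<^sup>2 / 2))"
    if x: "x \<in> space (PiM J (\<lambda>_. N))" for x
  proof -
    define c where "c = u (merge J R (x, \<lambda>_. 0))"
    have uc: "u (merge J R (x, y)) = c" for y
      unfolding c_def by (rule dep) (auto simp: merge_def R_def)
    have my: "merge J R (x, y) (\<rho> j) = y (\<rho> j)" if "j < m" for y j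
      using IJR that unfolding R_def by (auto simp: merge_def)
    define ri where "ri = the_inv_into {..<m} \<rho>"
    have ri: "ri (\<rho> j) = j" if "j < m" for j
      unfolding ri_def using inj that by (simp add: the_inv_into_f_f)
    define g where "g = (\<lambda>r z. ennreal (exp (T * c (ri r) * z)))"
    have "(\<integral>\<^sup>+ y. ennreal (exp (T * G (merge J R (x, y)))) \<partial>PiM R (\<lambda>_. N))
        = (\<integral>\<^sup>+ y. (\<Prod>r\<in>R. g r (y r)) \<partial>PiM R (\<lambda>_. N))"
    proof (rule nn_integral_cong)
      fix y
      have "(\<Prod>r\<in>R. g r (y r)) = (\<Prod>j<m. g (\<rho> j) (y (\<rho> j)))"
        unfolding R_def using inj by (simp add: prod.reindex)
      also have "\<dots> = (\<Prod>j<m. ennreal (exp (T * (y (\<rho> j) * c j))))"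
        by (rule prod.cong) (auto simp: g_def ri mult_ac)
      also have "\<dots> = ennreal (\<Prod>j<m. exp (T * (y (\<rho> j) * c j)))"
        by (simp add: prod_ennreal)
      also have "\<dots> = ennreal (exp (T * G (merge J R (x, y))))"
        unfolding G_def uc by (simp add: exp_sum sum_distrib_left my)
      finally show "ennreal (exp (T * G (merge J R (x, y)))) = (\<Prod>r\<in>R. g r (y r))" ..
    qed
    also have "\<dots> = (\<Prod>r\<in>R. integral\<^sup>N N (g r))"
      apply (rule PS.product_nn_integral_prod)
       apply (simp add: IJR)
      unfolding g_def N_def by (rule mexp)
    also have "\<dots> = (\<Prod>r\<in>R. ennreal (exp ((T * c (ri r))\<^sup>2 / 2)))"
      unfolding g_def N_def by (simp add: mgf_std_normal)
    also have "\<dots> = (\<Prod>j<m. ennreal (exp ((T * c j)\<^sup>2 / 2)))"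
      unfolding R_def using inj by (simp add: prod.reindex ri)
    also have "\<dots> = ennreal (exp (T\<^sup>2 * (\<Sum>j<m. (c j)\<^sup>2) / 2))"
      by (simp add: prod_ennreal exp_sum[symmetric] sum_divide_distrib sum_distrib_left power_mult_distrib)
    also have "\<dots> \<le> ennreal (exp (T\<^sup>2 / 2))"
    proof -
      have "T\<^sup>2 * (\<Sum>j<m. (c j)\<^sup>2) \<le> T\<^sup>2 * 1"
        using nrm[of "merge J R (x, \<lambda>_. 0)"] unfolding c_def by (intro mult_left_mono) auto
      then show ?thesis by simp
    qed
    finally show ?thesis .
  qed
  have "(\<integral>\<^sup>+ \<omega>. ennreal (exp (T * G \<omega>)) \<partial>P) = (\<integral>\<^sup>+ x. (\<integral>\<^sup>+ y. ennreal (exp (T * G (merge J R (x, y)))) \<partial>PiM R (\<lambda>_. N)) \<partial>PiM J (\<lambda>_. N))"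
    unfolding P_def IJR(1) by (rule PS.product_nn_integral_fold) (use IJR in \<open>auto simp: P_def[symmetric] IJR(1)[symmetric]\<close>)
  also have "\<dots> \<le> (\<integral>\<^sup>+ x. ennreal (exp (T\<^sup>2 / 2)) \<partial>PiM J (\<lambda>_. N))"
    by (rule nn_integral_mono) (rule inner)
  also have "\<dots> = ennreal (exp (T\<^sup>2 / 2))"
  proof -
    interpret PJ: prob_space "PiM J (\<lambda>_. N)" by (rule prob_space_PiM) (use probN in auto)
    show ?thesis by (simp add: PJ.emeasure_space_1)
  qed
  finally have step3: "(\<integral>\<^sup>+ \<omega>. ennreal (exp (T * G \<omega>)) \<partial>P) \<le> ennreal (exp (T\<^sup>2 / 2))" .
  have e1: "ennreal (exp (T * G \<omega> - T\<^sup>2)) = ennreal (exp (- T\<^sup>2)) * ennreal (exp (T * G \<omega>))" for \<omega>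
  proof -
    have "exp (T * G \<omega> - T\<^sup>2) = exp (- T\<^sup>2) * exp (T * G \<omega>)" by (simp add: exp_add[symmetric])
    then show ?thesis by (simp add: ennreal_mult)
  qed
  have "(\<integral>\<^sup>+ \<omega>. ennreal (exp (T * G \<omega> - T\<^sup>2)) \<partial>P) = (\<integral>\<^sup>+ \<omega>. ennreal (exp (- T\<^sup>2)) * ennreal (exp (T * G \<omega>)) \<partial>P)"
    by (simp only: e1)
  also have "\<dots> = ennreal (exp (- T\<^sup>2)) * (\<integral>\<^sup>+ \<omega>. ennreal (exp (T * G \<omega>)) \<partial>P)"
    by (rule nn_integral_cmult) (rule measurable_compose[OF Gm mexp2])
  also have "\<dots> \<le> ennreal (exp (- T\<^sup>2)) * ennreal (exp (T\<^sup>2 / 2))"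
    by (rule mult_mono[OF order_refl step3 zero_le zero_le])
  also have "\<dots> = ennreal (exp (- T\<^sup>2 / 2))"
  proof -
    have "exp (- T\<^sup>2) * exp (T\<^sup>2 / 2) = exp (- T\<^sup>2 / 2)" by (simp add: exp_add[symmetric])
    then show ?thesis by (simp add: ennreal_mult[symmetric])
  qed
  finally have fin: "(\<integral>\<^sup>+ \<omega>. ennreal (exp (T * G \<omega> - T\<^sup>2)) \<partial>P) \<le> ennreal (exp (- T\<^sup>2 / 2))" .
  from order_trans[OF step1 fin] show ?thesis unfolding P_def N_def G_def .
qed


definition dsig :: "real \<Rightarrow> real \<Rightarrow> real" where
  "dsig lam z = exp (z - lam) / (1 + exp (z - lam)) + exp (- z - lam) / (1 + exp (- z - lam))"

lemma sigma_deriv: "(lista_sigma lam has_real_derivative dsig lam z) (at z)"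
proof -
  have p1: "0 < 1 + exp (z - lam)" "0 < 1 + exp (- z - lam)" by (auto intro: add_pos_pos)
  have "((\<lambda>x. ln (1 + exp (x - lam)) - ln (1 + exp (- x - lam))) has_real_derivative
     (exp (z - lam) * 1) / (1 + exp (z - lam)) - (exp (- z - lam) * (- 1)) / (1 + exp (- z - lam))) (at z)"
    using p1 by (auto intro!: derivative_eq_intros)
  then show ?thesis unfolding lista_sigma_def dsig_def by (simp add: fun_eq_iff)
qed

lemma dsig_bound: "\<bar>dsig lam z\<bar> \<le> 2"
proof -
  have b: "\<bar>exp a / (1 + exp a)\<bar> \<le> 1" for a :: real
    by (simp add: abs_of_pos add_pos_pos)
  show ?thesis unfolding dsig_def using b[of "z - lam"] b[of "- z - lam"] by linarith
qed

definition pre :: "nat \<Rightarrow> nat \<Rightarrow> (nat \<Rightarrow> real) \<Rightarrow> (nat \<times> nat \<times> nat \<times> nat \<Rightarrow> real) \<Rightarrow> nat \<Rightarrow> (nat \<Rightarrow> real) \<Rightarrow> nat \<Rightarrow> real" where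
  "pre n m y \<omega> b x i = (\<Sum>j<n. W1 \<omega> b i j * y j) / sqrt n + (\<Sum>j<m. W2 \<omega> b i j * x j) / sqrt m"

lemma layer_pre: "lista_layer lam n m y \<omega> b x i = (if i < m then lista_sigma lam (pre n m y \<omega> b x i) else 0)"
  unfolding lista_layer_def pre_def by simp

primrec tang :: "real \<Rightarrow> nat \<Rightarrow> nat \<Rightarrow> (nat \<Rightarrow> real) \<Rightarrow> (nat \<times> nat \<times> nat \<times> nat \<Rightarrow> real) \<Rightarrow> nat
   \<Rightarrow> (nat \<Rightarrow> real) \<Rightarrow> nat \<Rightarrow> nat \<Rightarrow> nat \<Rightarrow> real" where
  "tang lam n m y \<omega> a x j 0 = (\<lambda>i. if i = j then 1 else 0)"
| "tang lam n m y \<omega> a x j (Suc k) = (\<lambda>i. if i < m then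
     dsig lam (pre n m y \<omega> (a + Suc k) (lista_fwd lam n m y \<omega> a k x) i) *
     ((\<Sum>j'<m. W2 \<omega> (a + Suc k) i j' * tang lam n m y \<omega> a x j k j') / sqrt m) else 0)"

lemma fwd_deriv:
  "((\<lambda>t. lista_fwd lam n m y \<omega> a k (x(j := x j + t)) i) has_real_derivative tang lam n m y \<omega> a x j k i) (at 0)"
proof (induction k arbitrary: i)
  case 0
  show ?case
  proof (cases "i = j")
    case True
    then show ?thesis by (auto intro!: derivative_eq_intros)
  next
    case False
    then show ?thesis by (auto intro!: derivative_eq_intros)
  qed
next
  case (Suc k)
  show ?case
  proof (cases "i < m")
    case False
    then show ?thesis by (simp add: layer_pre)
  next
    case True
    have x0: "x(j := x j + 0) = x" by simp
    have h: "((\<lambda>t. pre n m y \<omega> (a + Suc k) (lista_fwd lam n m y \<omega> a k (x(j := x j + t))) i) has_real_derivative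
        (\<Sum>j'<m. W2 \<omega> (a + Suc k) i j' * tang lam n m y \<omega> a x j k j') / sqrt m) (at 0)"
    proof -
      have h1: "((\<lambda>t. \<Sum>j'<m. W2 \<omega> (a + Suc k) i j' * lista_fwd lam n m y \<omega> a k (x(j := x j + t)) j') has_real_derivative
          (\<Sum>j'<m. W2 \<omega> (a + Suc k) i j' * tang lam n m y \<omega> a x j k j')) (at 0)"
        by (intro DERIV_sum DERIV_cmult Suc.IH)
      note h3 = DERIV_add[OF DERIV_const[of "(\<Sum>j<n. W1 \<omega> (a + Suc k) i j * y j) / sqrt n"] DERIV_cdivide[OF h1, of "sqrt m"]]
      then show ?thesis unfolding pre_def by simp
    qed
    have "((\<lambda>t. lista_sigma lam (pre n m y \<omega> (a + Suc k) (lista_fwd lam n m y \<omega> a k (x(j := x j + t))) i)) has_real_derivative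
        dsig lam (pre n m y \<omega> (a + Suc k) (lista_fwd lam n m y \<omega> a k (x(j := x j + 0))) i) *
        ((\<Sum>j'<m. W2 \<omega> (a + Suc k) i j' * tang lam n m y \<omega> a x j k j') / sqrt m)) (at 0)"
      by (rule DERIV_chain2[OF sigma_deriv h])
    then show ?thesis using True by (simp add: layer_pre x0 del: fun_upd_apply)
  qed
qed

lemma b_eq: "lista_b lam L n m y x0 \<omega> l s j =
   tang lam n m y \<omega> l (lista_x lam n m y x0 \<omega> l) j (L - l) s / sqrt m"
proof -
  let ?x = "lista_x lam n m y x0 \<omega> l"
  have "((\<lambda>t. lista_fwd lam n m y \<omega> l (L - l) (?x(j := ?x j + t)) s / sqrt m) has_real_derivative
      tang lam n m y \<omega> l ?x j (L - l) s / sqrt m) (at 0)"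
    by (rule DERIV_cdivide[OF fwd_deriv])
  then show ?thesis unfolding lista_b_def Let_def by (rule DERIV_imp_deriv)
qed


definition agree :: "nat \<Rightarrow> (nat \<times> nat \<times> nat \<times> nat \<Rightarrow> real) \<Rightarrow> (nat \<times> nat \<times> nat \<times> nat \<Rightarrow> real) \<Rightarrow> bool" where
  "agree A \<omega> \<omega>' \<longleftrightarrow> (\<forall>b a i j. a \<le> A \<longrightarrow> \<omega> (b, a, i, j) = \<omega>' (b, a, i, j))"

lemma pre_dep: "agree A \<omega> \<omega>' \<Longrightarrow> b \<le> A \<Longrightarrow> pre n m y \<omega> b x i = pre n m y \<omega>' b x i"
  unfolding pre_def W1_def W2_def agree_def by simp

lemma x_dep: "agree A \<omega> \<omega>' \<Longrightarrow> l \<le> A \<Longrightarrow> lista_x lam n m y x0 \<omega> l = lista_x lam n m y x0 \<omega>' l"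
proof (induction l)
  case 0 then show ?case by simp
next
  case (Suc l)
  then have IH: "lista_x lam n m y x0 \<omega> l = lista_x lam n m y x0 \<omega>' l" by simp
  show ?case
  proof (rule ext)
    fix i show "lista_x lam n m y x0 \<omega> (Suc l) i = lista_x lam n m y x0 \<omega>' (Suc l) i"
      using pre_dep[OF Suc.prems] by (simp add: layer_pre IH)
  qed
qed

lemma fwd_dep: "agree A \<omega> \<omega>' \<Longrightarrow> a + k \<le> A \<Longrightarrow> lista_fwd lam n m y \<omega> a k x = lista_fwd lam n m y \<omega>' a k x"
proof (induction k)
  case 0 then show ?case by simp
next
  case (Suc k)
  then have IH: "lista_fwd lam n m y \<omega> a k x = lista_fwd lam n m y \<omega>' a k x" by simp
  show ?case
  proof (rule ext)
    fix i show "lista_fwd lam n m y \<omega> a (Suc k) x i = lista_fwd lam n m y \<omega>' a (Suc k) x i"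
      using pre_dep[OF Suc.prems(1)] Suc.prems(2) by (simp add: layer_pre IH)
  qed
qed

lemma tang_dep: "agree A \<omega> \<omega>' \<Longrightarrow> a + k \<le> A \<Longrightarrow> tang lam n m y \<omega> a x j k = tang lam n m y \<omega>' a x j k"
proof (induction k)
  case 0 then show ?case by simp
next
  case (Suc k)
  then have IH: "tang lam n m y \<omega> a x j k = tang lam n m y \<omega>' a x j k" by simp
  have F: "lista_fwd lam n m y \<omega> a k x = lista_fwd lam n m y \<omega>' a k x"
    using fwd_dep[OF Suc.prems(1)] Suc.prems(2) by simp
  have W: "W2 \<omega> (Suc (a + k)) i j' = W2 \<omega>' (Suc (a + k)) i j'" for i j'
    using Suc.prems unfolding agree_def W2_def by simp
  show ?case
  proof (rule ext)
    fix i show "tang lam n m y \<omega> a x j (Suc k) i = tang lam n m y \<omega>' a x j (Suc k) i"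
      using pre_dep[OF Suc.prems(1)] Suc.prems(2) by (simp add: IH F W)
  qed
qed

abbreviation "PM I \<equiv> PiM I (\<lambda>_. std_normal_measure)"

lemma W1_meas: "(\<lambda>\<omega>. W1 \<omega> b i j) \<in> borel_measurable (PM I)"
  unfolding W1_def by (rule comp_meas)
lemma W2_meas: "(\<lambda>\<omega>. W2 \<omega> b i j) \<in> borel_measurable (PM I)"
  unfolding W2_def by (rule comp_meas)

lemma pre_meas:
  assumes "\<And>i. (\<lambda>\<omega>. X \<omega> i) \<in> borel_measurable (PM I)"
  shows "(\<lambda>\<omega>. pre n m y \<omega> b (X \<omega>) i) \<in> borel_measurable (PM I)"
  unfolding pre_def
  by (intro borel_measurable_add borel_measurable_divide borel_measurable_sum borel_measurable_times
      borel_measurable_const W1_meas W2_meas assms)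

lemma sig_borel: "lista_sigma lam \<in> borel_measurable borel"
  unfolding lista_sigma_def by measurable

lemma dsig_borel: "dsig lam \<in> borel_measurable borel"
  unfolding dsig_def by measurable

lemma x_meas: "(\<lambda>\<omega>. lista_x lam n m y x0 \<omega> l i) \<in> borel_measurable (PM I)"
proof (induction l arbitrary: i)
  case 0 then show ?case by simp
next
  case (Suc l)
  show ?case
  proof (cases "i < m")
    case True
    have "(\<lambda>\<omega>. lista_sigma lam (pre n m y \<omega> (Suc l) (lista_x lam n m y x0 \<omega> l) i)) \<in> borel_measurable (PM I)"
      by (rule measurable_compose[OF pre_meas[OF Suc.IH] sig_borel])
    then show ?thesis using True by (simp add: layer_pre)
  next
    case False then show ?thesis by (simp add: layer_pre)
  qed
qed

lemma fwd_meas: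
  assumes X: "\<And>i. (\<lambda>\<omega>. X \<omega> i) \<in> borel_measurable (PM I)"
  shows "(\<lambda>\<omega>. lista_fwd lam n m y \<omega> a k (X \<omega>) i) \<in> borel_measurable (PM I)"
proof (induction k arbitrary: i)
  case 0 then show ?case using X by simp
next
  case (Suc k)
  show ?case
  proof (cases "i < m")
    case True
    have "(\<lambda>\<omega>. lista_sigma lam (pre n m y \<omega> (a + Suc k) (lista_fwd lam n m y \<omega> a k (X \<omega>)) i)) \<in> borel_measurable (PM I)"
      by (rule measurable_compose[OF pre_meas[OF Suc.IH] sig_borel])
    then show ?thesis using True by (simp add: layer_pre)
  next
    case False then show ?thesis by (simp add: layer_pre)
  qed
qed

lemma tang_meas:
  assumes X: "\<And>i. (\<lambda>\<omega>. X \<omega> i) \<in> borel_measurable (PM I)"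
  shows "(\<lambda>\<omega>. tang lam n m y \<omega> a (X \<omega>) j k i) \<in> borel_measurable (PM I)"
proof (induction k arbitrary: i)
  case 0 then show ?case by simp
next
  case (Suc k)
  show ?case
  proof (cases "i < m")
    case True
    have d: "(\<lambda>\<omega>. dsig lam (pre n m y \<omega> (a + Suc k) (lista_fwd lam n m y \<omega> a k (X \<omega>)) i)) \<in> borel_measurable (PM I)"
      by (rule measurable_compose[OF pre_meas[OF fwd_meas[OF X]] dsig_borel])
    have s: "(\<lambda>\<omega>. (\<Sum>j'<m. W2 \<omega> (a + Suc k) i j' * tang lam n m y \<omega> a (X \<omega>) j k j') / sqrt m) \<in> borel_measurable (PM I)"
      by (intro borel_measurable_divide borel_measurable_sum borel_measurable_times borel_measurable_const W2_meas Suc.IH)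
    show ?thesis using True borel_measurable_times[OF d s] by simp
  next
    case False then show ?thesis by simp
  qed
qed


lemma chain:
  fixes tv d S :: "nat \<Rightarrow> nat \<Rightarrow> real" and nr :: "nat \<Rightarrow> real"
  assumes nr_def: "\<And>k. nr k = sqrt (\<Sum>i<m. (tv k i)\<^sup>2)"
  and m: "m > 0" and T: "T \<ge> 0"
  and rec: "\<And>k i. k < K \<Longrightarrow> i < m \<Longrightarrow> tv (Suc k) i = d k i * (S k i / sqrt m)"
  and dB: "\<And>k i. \<bar>d k i\<bar> \<le> 2"
  and SB: "\<And>k i. k < K \<Longrightarrow> i < m \<Longrightarrow> \<bar>S k i\<bar> \<le> T * nr k"
  and n0: "nr 0 = 1"
  shows "k \<le> K \<Longrightarrow> nr k \<le> (2 * T) ^ k"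
proof (induction k)
  case 0 then show ?case using n0 by simp
next
  case (Suc k)
  then have kK: "k < K" by simp
  have IH: "nr k \<le> (2 * T) ^ k" using Suc by simp
  have nrk: "nr k \<ge> 0" unfolding nr_def by (simp add: sum_nonneg)
  have sm: "sqrt (real m) > 0" using m by simp
  have each: "(tv (Suc k) i)\<^sup>2 \<le> (2 * T * nr k)\<^sup>2 / m" if i: "i < m" for i
  proof -
    have "\<bar>tv (Suc k) i\<bar> = \<bar>d k i\<bar> * \<bar>S k i\<bar> / sqrt m"
      using rec[OF kK i] sm by (simp add: abs_mult)
    also have "\<dots> \<le> 2 * (T * nr k) / sqrt m"
      using dB[of k i] SB[OF kK i] sm by (intro divide_right_mono mult_mono) auto
    finally have a: "\<bar>tv (Suc k) i\<bar> \<le> 2 * T * nr k / sqrt m" by simp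
    have "(tv (Suc k) i)\<^sup>2 = \<bar>tv (Suc k) i\<bar>\<^sup>2" by simp
    also have "\<dots> \<le> (2 * T * nr k / sqrt m)\<^sup>2"
      using a by (intro power_mono) auto
    also have "\<dots> = (2 * T * nr k)\<^sup>2 / m" using m by (simp add: power_divide)
    finally show ?thesis .
  qed
  have "(\<Sum>i<m. (tv (Suc k) i)\<^sup>2) \<le> (\<Sum>i<m. (2 * T * nr k)\<^sup>2 / m)"
    using each by (intro sum_mono) auto
  also have "\<dots> = (2 * T * nr k)\<^sup>2" using m by simp
  finally have "nr (Suc k) \<le> sqrt ((2 * T * nr k)\<^sup>2)" unfolding nr_def[of "Suc k"] by (rule real_sqrt_le_mono)
  also have "\<dots> = 2 * T * nr k" using T nrk by simp
  also have "\<dots> \<le> 2 * T * (2 * T) ^ k" using IH T by (intro mult_left_mono) auto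
  finally show ?case by simp
qed

lemma coord_le_nr: "(s::nat) < m \<Longrightarrow> \<bar>v s\<bar> \<le> sqrt (\<Sum>i<m. (v i)\<^sup>2)"
proof -
  assume s: "s < m"
  have "(v s)\<^sup>2 \<le> (\<Sum>i<m. (v i)\<^sup>2)"
    using s by (intro member_le_sum) auto
  then have "sqrt ((v s)\<^sup>2) \<le> sqrt (\<Sum>i<m. (v i)\<^sup>2)" by (rule real_sqrt_le_mono)
  then show ?thesis by simp
qed

lemma arith_final:
  fixes m L K :: nat and T :: real
  assumes T: "T = ln (real m)" and m: "m > 0" and L: "L \<ge> 1" and KL: "K \<le> L"
  and big: "T \<ge> 4 * ln (2 * real L) + 8"
  shows "real (m * K * m * 2) * exp (- T\<^sup>2 / 2) \<le> real m * exp (- (1/4) * T\<^sup>2)"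
proof -
  have lnL: "ln (2 * real L) \<ge> 0" using L by simp
  have T8: "T \<ge> 8" using big lnL by linarith
  have "8 * T \<le> T * T" using T8 by (intro mult_right_mono) auto
  then have "T\<^sup>2 / 4 \<ge> 2 * T" by (simp add: power2_eq_square)
  then have key: "ln (2 * real L) + T \<le> T\<^sup>2 / 4" using big lnL by linarith
  have "2 * real L * real m = exp (ln (2 * real L) + T)"
    using L m T by (simp add: exp_add)
  also have "\<dots> \<le> exp (T\<^sup>2 / 4)" using key by simp
  finally have a: "2 * real L * real m \<le> exp (T\<^sup>2 / 4)" .
  have "real (m * K * m * 2) * exp (- T\<^sup>2 / 2) \<le> real m * (2 * real L * real m) * exp (- T\<^sup>2 / 2)"
  proof (intro mult_right_mono)
    have "real K * (real m * real m) \<le> real L * (real m * real m)"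
      using KL by (intro mult_right_mono) auto
    then show "real (m * K * m * 2) \<le> real m * (2 * real L * real m)" by (simp add: mult_ac)
  qed simp
  also have "\<dots> \<le> real m * exp (T\<^sup>2 / 4) * exp (- T\<^sup>2 / 2)"
    using a by (intro mult_right_mono mult_left_mono) auto
  also have "\<dots> = real m * exp (- (1/4) * T\<^sup>2)"
    by (simp add: mult.assoc exp_add[symmetric])
  finally show ?thesis .
qed


theorem lemma7:
  fixes lam Cx Cy :: real and L n :: nat
  assumes "lam > 0" and "L \<ge> 1" and "n \<ge> 1"
  shows "\<forall>l \<in> {1..L}. \<exists>c > 0. \<exists>C k :: real. \<exists>M :: nat. \<forall>m \<ge> M.
    \<forall>y x0 :: nat \<Rightarrow> real. (\<forall>i < n. \<bar>y i\<bar> \<le> Cy) \<longrightarrow> (\<forall>i < m. \<bar>x0 i\<bar> \<le> Cx) \<longrightarrow>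
    (\<forall>s < m.
      measure (lista_init L n m)
        {\<omega> \<in> space (lista_init L n m).
           lista_b_inf lam L n m y x0 \<omega> l s \<le> C * ln (real m) powr k / sqrt (real m)}
      \<ge> 1 - real m * exp (- c * (ln (real m))\<^sup>2))"
proof (intro ballI)
  fix l assume l: "l \<in> {1..L}"
  define K where "K = L - l"
  define M :: nat where "M = nat \<lceil>exp (4 * ln (2 * real L) + 8)\<rceil> + 2"
  have main: "measure (lista_init L n m) {\<omega> \<in> space (lista_init L n m).
           lista_b_inf lam L n m y x0 \<omega> l s \<le> 2 ^ K * ln (real m) powr real K / sqrt (real m)}
      \<ge> 1 - real m * exp (- (1/4) * (ln (real m))\<^sup>2)"
    if mM: "M \<le> m" and s: "s < m" for m y x0 s
  proof -
    have m2: "m \<ge> 2" using mM unfolding M_def by simp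
    then have m0: "m > 0" by simp
    have "exp (4 * ln (2 * real L) + 8) \<le> real M"
      unfolding M_def by (metis (no_types, lifting) add_increasing2 of_nat_0_le_iff of_nat_add real_nat_ceiling_ge)
    also have "\<dots> \<le> real m" using mM by simp
    finally have "ln (exp (4 * ln (2 * real L) + 8)) \<le> ln (real m)"
      by (intro ln_mono) auto
    then have Tbig: "ln (real m) \<ge> 4 * ln (2 * real L) + 8" by simp
    define I where "I = lista_idx L n m"
    define P where "P = lista_init L n m"
    have P_eq: "P = PM I" unfolding P_def I_def lista_init_def by simp
    have probP: "prob_space P" unfolding P_eq by (rule prob_space_PiM) (rule prob_space_std)
    interpret prob_space P by (rule probP)
    define T where "T = ln (real m)"
    have T0: "T \<ge> 0" unfolding T_def using m0 by simp
    have Tpos: "ln (real m) > 0" using m2 by simp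
    define xl where "xl = (\<lambda>\<omega>. lista_x lam n m y x0 \<omega> l)"
    define tv where "tv = (\<lambda>\<omega> j k. tang lam n m y \<omega> l (xl \<omega>) j k)"
    define nr where "nr = (\<lambda>\<omega> j k. sqrt (\<Sum>i<m. (tv \<omega> j k i)\<^sup>2))"
    define \<rho> where "\<rho> = (\<lambda>k i j'. (2::nat, l + Suc k, i::nat, j'::nat))"
    define u where "u = (\<lambda>(sg::real) j k \<omega> j'. sg * tv \<omega> j k j' / nr \<omega> j k)"
    define Bad where "Bad = (\<lambda>(j, k, i, sg). {\<omega> \<in> space P. T \<le> (\<Sum>j'<m. \<omega> (\<rho> k i j') * u sg j k \<omega> j')})"
    define Ix where "Ix = {..<m} \<times> {..<K} \<times> {..<m} \<times> {1::real, -1}"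
    have xl_meas: "(\<lambda>\<omega>. xl \<omega> i) \<in> borel_measurable (PM I)" for i
      unfolding xl_def by (rule x_meas)
    have tv_meas: "(\<lambda>\<omega>. tv \<omega> j k i) \<in> borel_measurable P" for j k i
      unfolding tv_def P_eq by (rule tang_meas[OF xl_meas])
    have nr_meas: "(\<lambda>\<omega>. nr \<omega> j k) \<in> borel_measurable P" for j k
      unfolding nr_def
      by (rule measurable_compose[OF _ borel_measurable_sqrt])
         (intro borel_measurable_sum borel_measurable_power tv_meas)
    have u_meas: "(\<lambda>\<omega>. u sg j k \<omega> j') \<in> borel_measurable P" for sg j k j'
      unfolding u_def by (intro borel_measurable_divide borel_measurable_times borel_measurable_const tv_meas nr_meas)
    have Bad_sets: "Bad x \<in> sets P" for x
    proof -
      obtain j k i sg where x: "x = (j, k, i, sg)" by (cases x) auto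
      have cm: "(\<lambda>\<omega>. \<omega> (\<rho> k i j')) \<in> borel_measurable P" for j' unfolding P_eq by (rule comp_meas)
      have "(\<lambda>\<omega>. \<Sum>j'<m. \<omega> (\<rho> k i j') * u sg j k \<omega> j') \<in> borel_measurable P"
        by (intro borel_measurable_sum borel_measurable_times cm u_meas)
      then show ?thesis unfolding x Bad_def by (simp add: borel_measurable_le[OF borel_measurable_const])
    qed
    have finI: "finite I"
    proof (rule finite_subset)
      show "I \<subseteq> {1,2} \<times> {1..L} \<times> {..<m} \<times> {..<n+m}"
        unfolding I_def lista_idx_def by auto
    qed auto
    have Bad_bound: "measure P (Bad x) \<le> exp (- T\<^sup>2 / 2)" if x: "x \<in> Ix" for x
    proof -
      obtain j k i sg where xe: "x = (j, k, i, sg)" by (cases x) auto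
      have k: "k < K" and sg: "sg = 1 \<or> sg = -1" and i: "i < m" using x unfolding xe Ix_def by auto
      have "emeasure (PM I) {\<omega> \<in> space (PM I). T \<le> (\<Sum>j'<m. \<omega> (\<rho> k i j') * u sg j k \<omega> j')} \<le> ennreal (exp (- T\<^sup>2 / 2))"
      proof (rule core[OF finI])
        show "inj_on (\<rho> k i) {..<m}" by (simp add: inj_on_def \<rho>_def)
        show "\<rho> k i ` {..<m} \<subseteq> I" using k i l unfolding \<rho>_def I_def lista_idx_def K_def by auto
        show "(\<lambda>\<omega>. u sg j k \<omega> j') \<in> borel_measurable (PM I)" for j' using u_meas P_eq by simp
        show "T \<ge> 0" by (rule T0)
        show "u sg j k \<omega> = u sg j k \<omega>'" if H: "\<And>\<iota>. \<iota> \<notin> \<rho> k i ` {..<m} \<Longrightarrow> \<omega> \<iota> = \<omega>' \<iota>" for \<omega> \<omega>'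
        proof -
          have ag: "agree (l + k) \<omega> \<omega>'"
            unfolding agree_def
          proof (intro allI impI)
            fix b a i' j' assume "a \<le> l + k"
            then have "(b, a, i', j') \<notin> \<rho> k i ` {..<m}" unfolding \<rho>_def by auto
            then show "\<omega> (b, a, i', j') = \<omega>' (b, a, i', j')" by (rule H)
          qed
          have "xl \<omega> = xl \<omega>'" unfolding xl_def by (rule x_dep[OF ag]) simp
          moreover have "tang lam n m y \<omega> l (xl \<omega>') j k = tang lam n m y \<omega>' l (xl \<omega>') j k"
            by (rule tang_dep[OF ag]) simp
          ultimately have "tv \<omega> j k = tv \<omega>' j k" unfolding tv_def by simp
          then show ?thesis unfolding u_def nr_def by simp
        qed
        show "(\<Sum>j'<m. (u sg j k \<omega> j')\<^sup>2) \<le> 1" for \<omega>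
        proof -
          have sq: "sg\<^sup>2 = 1" using sg by auto
          have "(\<Sum>j'<m. (u sg j k \<omega> j')\<^sup>2) = (\<Sum>j'<m. (tv \<omega> j k j')\<^sup>2) / (nr \<omega> j k)\<^sup>2"
            unfolding u_def by (simp add: power_mult_distrib power_divide sq sum_divide_distrib)
          also have "(nr \<omega> j k)\<^sup>2 = (\<Sum>j'<m. (tv \<omega> j k j')\<^sup>2)"
            unfolding nr_def by (simp add: sum_nonneg)
          finally show ?thesis by (cases "(\<Sum>j'<m. (tv \<omega> j k j')\<^sup>2) = 0") auto
        qed
      qed
      then have "emeasure P (Bad x) \<le> ennreal (exp (- T\<^sup>2 / 2))"
        unfolding xe Bad_def P_eq by simp
      then show ?thesis by (simp add: emeasure_eq_measure)
    qed
    define Good where "Good = space P - (\<Union>x\<in>Ix. Bad x)"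
    have finIx: "finite Ix" unfolding Ix_def by simp
    have cardIx: "card Ix = m * K * m * 2" unfolding Ix_def by (simp add: card_cartesian_product)
    have UN_sets: "(\<Union>x\<in>Ix. Bad x) \<in> sets P" using finIx Bad_sets by auto
    have "measure P Good = 1 - measure P (\<Union>x\<in>Ix. Bad x)"
      unfolding Good_def by (rule prob_compl[OF UN_sets])
    moreover have "measure P (\<Union>x\<in>Ix. Bad x) \<le> (\<Sum>x\<in>Ix. measure P (Bad x))"
      by (rule finite_measure_subadditive_finite[OF finIx]) (use Bad_sets in auto)
    moreover have "(\<Sum>x\<in>Ix. measure P (Bad x)) \<le> real (m * K * m * 2) * exp (- T\<^sup>2 / 2)"
    proof -
      have "(\<Sum>x\<in>Ix. measure P (Bad x)) \<le> real (card Ix) * exp (- T\<^sup>2 / 2)"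
        by (rule sum_bounded_above) (rule Bad_bound)
      then show ?thesis unfolding cardIx .
    qed
    moreover have "real (m * K * m * 2) * exp (- T\<^sup>2 / 2) \<le> real m * exp (- (1/4) * T\<^sup>2)"
      by (rule arith_final[OF T_def m0 \<open>L \<ge> 1\<close>]) (use Tbig in \<open>auto simp: K_def T_def\<close>)
    ultimately have Good_ge: "measure P Good \<ge> 1 - real m * exp (- (1/4) * T\<^sup>2)"
      by linarith
    define bound where "bound = 2 ^ K * ln (real m) powr real K / sqrt (real m)"
    have binf_eq: "(\<lambda>\<omega>. lista_b_inf lam L n m y x0 \<omega> l s) = (\<lambda>\<omega>. Max ((\<lambda>j. \<bar>tv \<omega> j K s / sqrt m\<bar>) ` {..<m}))"
      by (rule ext) (simp add: lista_b_inf_def b_eq tv_def xl_def K_def)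
    have binf_meas: "(\<lambda>\<omega>. lista_b_inf lam L n m y x0 \<omega> l s) \<in> borel_measurable P"
      unfolding binf_eq
      by (intro borel_measurable_Max finite_lessThan borel_measurable_abs borel_measurable_divide borel_measurable_const tv_meas)
    define Gset where "Gset = {\<omega> \<in> space P. lista_b_inf lam L n m y x0 \<omega> l s \<le> bound}"
    have Gset_sets: "Gset \<in> sets P"
      unfolding Gset_def by (rule borel_measurable_le[OF binf_meas borel_measurable_const])
    have sub: "Good \<subseteq> Gset"
    proof
      fix \<omega> assume \<omega>: "\<omega> \<in> Good"
      then have sp: "\<omega> \<in> space P" and nb: "\<And>x. x \<in> Ix \<Longrightarrow> \<omega> \<notin> Bad x" unfolding Good_def by auto
      have each: "\<bar>tv \<omega> j K s / sqrt m\<bar> \<le> bound" if j: "j < m" for j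
      proof -
        define Sg where "Sg = (\<lambda>k i. \<Sum>j'<m. W2 \<omega> (l + Suc k) i j' * tv \<omega> j k j')"
        have SB: "\<bar>Sg k i\<bar> \<le> T * nr \<omega> j k" if k: "k < K" and i: "i < m" for k i
        proof -
          have ex: "(\<Sum>j'<m. \<omega> (\<rho> k i j') * u sg j k \<omega> j') = sg * Sg k i / nr \<omega> j k" for sg
            unfolding u_def Sg_def by (simp add: sum_divide_distrib sum_distrib_left W2_def \<rho>_def mult_ac)
          have n1: "\<omega> \<notin> Bad (j, k, i, 1)" and n2: "\<omega> \<notin> Bad (j, k, i, -1)"
            using nb k i j unfolding Ix_def by auto
          have a1: "Sg k i / nr \<omega> j k < T" using n1 sp ex[of 1] unfolding Bad_def by simp
          have a2: "- Sg k i / nr \<omega> j k < T" using n2 sp ex[of "-1"] unfolding Bad_def by simp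
          show ?thesis
          proof (cases "nr \<omega> j k = 0")
            case True
            then have "(\<Sum>i<m. (tv \<omega> j k i)\<^sup>2) = 0" unfolding nr_def by simp
            then have "\<forall>i\<in>{..<m}. (tv \<omega> j k i)\<^sup>2 = 0" by (subst (asm) sum_nonneg_eq_0_iff) auto
            then have "Sg k i = 0" unfolding Sg_def by simp
            then show ?thesis using True by simp
          next
            case False
            have "nr \<omega> j k \<ge> 0" unfolding nr_def by (simp add: sum_nonneg)
            then have pos: "nr \<omega> j k > 0" using False by simp
            have "Sg k i = (Sg k i / nr \<omega> j k) * nr \<omega> j k" using pos by simp
            also have "\<dots> < T * nr \<omega> j k" using a1 pos by (rule mult_strict_right_mono)
            finally have b1: "Sg k i < T * nr \<omega> j k" .
            have "- Sg k i = (- Sg k i / nr \<omega> j k) * nr \<omega> j k" using pos by simp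
            also have "\<dots> < T * nr \<omega> j k" using a2 pos by (rule mult_strict_right_mono)
            finally have b2: "- Sg k i < T * nr \<omega> j k" .
            note b1 b2
            then show ?thesis by linarith
          qed
        qed
        have chainr: "nr \<omega> j K \<le> (2 * T) ^ K"
        proof (rule chain[where tv = "tv \<omega> j" and nr = "nr \<omega> j" and m = m and K = K and S = Sg
              and d = "\<lambda>k i. dsig lam (pre n m y \<omega> (l + Suc k) (lista_fwd lam n m y \<omega> l k (xl \<omega>)) i)"])
          show "nr \<omega> j k = sqrt (\<Sum>i<m. (tv \<omega> j k i)\<^sup>2)" for k unfolding nr_def by simp
          show "m > 0" by (rule m0)
          show "T \<ge> 0" by (rule T0)
          show "tv \<omega> j (Suc k) i = dsig lam (pre n m y \<omega> (l + Suc k) (lista_fwd lam n m y \<omega> l k (xl \<omega>)) i) * (Sg k i / sqrt m)"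
            if "k < K" "i < m" for k i using that unfolding tv_def Sg_def by simp
          show "\<bar>dsig lam (pre n m y \<omega> (l + Suc k) (lista_fwd lam n m y \<omega> l k (xl \<omega>)) i)\<bar> \<le> 2" for k i
            by (rule dsig_bound)
          show "\<bar>Sg k i\<bar> \<le> T * nr \<omega> j k" if "k < K" "i < m" for k i using SB that by simp
          show "nr \<omega> j 0 = 1"
          proof -
            have "(\<Sum>i<m. (tv \<omega> j 0 i)\<^sup>2) = (\<Sum>i<m. if i = j then 1 else 0)"
              unfolding tv_def by (rule sum.cong) auto
            also have "\<dots> = 1" using j by simp
            finally show ?thesis unfolding nr_def by simp
          qed
        qed simp
        have "\<bar>tv \<omega> j K s / sqrt m\<bar> = \<bar>tv \<omega> j K s\<bar> / sqrt m" by (simp add: abs_div)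
        also have "\<dots> \<le> nr \<omega> j K / sqrt m"
          unfolding nr_def using s m0 by (intro divide_right_mono coord_le_nr) auto
        also have "\<dots> \<le> (2 * T) ^ K / sqrt m"
          using chainr by (intro divide_right_mono) auto
        also have "\<dots> = bound"
          unfolding bound_def T_def using Tpos by (simp add: powr_realpow power_mult_distrib)
        finally show ?thesis .
      qed
      have "lista_b_inf lam L n m y x0 \<omega> l s \<le> bound"
      proof -
        have "Max ((\<lambda>j. \<bar>tv \<omega> j K s / sqrt m\<bar>) ` {..<m}) \<le> bound"
          using each m0 by (intro Max.boundedI) auto
        then show ?thesis using fun_cong[OF binf_eq, of \<omega>] by simp
      qed
      then show "\<omega> \<in> Gset" unfolding Gset_def using sp by simp
    qed
    have "measure P Good \<le> measure P Gset" by (rule finite_measure_mono[OF sub Gset_sets])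
    with Good_ge have "measure P Gset \<ge> 1 - real m * exp (- (1/4) * T\<^sup>2)" by linarith
    then show ?thesis unfolding Gset_def P_def bound_def T_def .
  qed
  show "\<exists>c > 0. \<exists>C k :: real. \<exists>M :: nat. \<forall>m \<ge> M.
    \<forall>y x0 :: nat \<Rightarrow> real. (\<forall>i < n. \<bar>y i\<bar> \<le> Cy) \<longrightarrow> (\<forall>i < m. \<bar>x0 i\<bar> \<le> Cx) \<longrightarrow>
    (\<forall>s < m.
      measure (lista_init L n m)
        {\<omega> \<in> space (lista_init L n m).
           lista_b_inf lam L n m y x0 \<omega> l s \<le> C * ln (real m) powr k / sqrt (real m)}
      \<ge> 1 - real m * exp (- c * (ln (real m))\<^sup>2))"
    apply (rule exI[where x="1/4"])
    apply (rule conjI)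
     apply simp
    apply (rule exI[where x="2 ^ K"])
    apply (rule exI[where x="real K"])
    apply (rule exI[where x=M])
    apply (intro allI impI)
    apply (rule main)
     apply assumption+
    done
qed

end
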